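(* Let $\mathcal{H}_A,\mathcal{H}_B$ be finite-dimensional Hilbert spaces and $|\Psi\rangle\in\mathcal{H}_A\otimes\mathcal{H}_B$ a unit vector. For a unit vector $|\phi\rangle\in\mathcal{H}_A$ with $(\langle\phi|\otimes\mathbf{1})|\Psi\rangle\neq0$, its relative state is the normalization of $(\langle\phi|\otimes\mathbf{1})|\Psi\rangle\in\mathcal{H}_B$; for a unit vector $|\chi\rangle\in\mathcal{H}_B$ with $(\mathbf{1}\otimes\langle\chi|)|\Psi\rangle\neq0$, its relative state is the normalization of $(\mathbf{1}\otimes\langle\chi|)|\Psi\rangle\in\mathcal{H}_A$. Let $|\phi^{(1)}\rangle\in\mathcal{H}_A$ be a unit vector with $\langle\Psi|(|\phi^{(1)}\rangle\langle\phi^{(1)}|\otimes\mathbf{1})|\Psi\rangle>0$. Then the sequence defined by letting $|\chi^{(i)}\rangle$ be the relative state of $|\phi^{(i)}\rangle$ and $|\phi^{(i+1)}\rangle$ the relative state of $|\chi^{(i)}\rangle$ is well defined for all $i\geq1$, and for every $N\geq1$, $\langle\phi^{(1)}|\phi^{(N)}\rangle\neq0$. *)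

theory Defs
  imports Complex_Main "HOL-Library.Complex_Order"
begin

text \<open>Finite-dimensional Hilbert spaces H_A, H_B are modelled as coordinate spaces
  'a \<Rightarrow> complex and 'b \<Rightarrow> complex over finite index types (orthonormal bases);
  H_A \<otimes> H_B is 'a \<times> 'b \<Rightarrow> complex.\<close>

definition cinner :: "('a::finite \<Rightarrow> complex) \<Rightarrow> ('a \<Rightarrow> complex) \<Rightarrow> complex" where
  "cinner u v = (\<Sum>i\<in>UNIV. cnj (u i) * v i)"

definition vnorm :: "('a::finite \<Rightarrow> complex) \<Rightarrow> real" where
  "vnorm v = sqrt (\<Sum>i\<in>UNIV. (cmod (v i))\<^sup>2)"

definition unit_vec :: "('a::finite \<Rightarrow> complex) \<Rightarrow> bool" where
  "unit_vec v \<longleftrightarrow> vnorm v = 1"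

definition normalize_vec :: "('a::finite \<Rightarrow> complex) \<Rightarrow> ('a \<Rightarrow> complex)" where
  "normalize_vec v = (\<lambda>i. v i / complex_of_real (vnorm v))"

definition contrA :: "('a::finite \<Rightarrow> complex) \<Rightarrow> ('a \<times> 'b::finite \<Rightarrow> complex) \<Rightarrow> ('b \<Rightarrow> complex)" where
  "contrA phi Psi = (\<lambda>j. \<Sum>i\<in>UNIV. cnj (phi i) * Psi (i, j))"

definition contrB :: "('b::finite \<Rightarrow> complex) \<Rightarrow> ('a::finite \<times> 'b \<Rightarrow> complex) \<Rightarrow> ('a \<Rightarrow> complex)" where
  "contrB chi Psi = (\<lambda>i. \<Sum>j\<in>UNIV. cnj (chi j) * Psi (i, j))"

text \<open>relative states (meaningful when the contracted vector is nonzero)\<close>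
definition relA :: "('a::finite \<times> 'b::finite \<Rightarrow> complex) \<Rightarrow> ('a \<Rightarrow> complex) \<Rightarrow> ('b \<Rightarrow> complex)" where
  "relA Psi phi = normalize_vec (contrA phi Psi)"

definition relB :: "('a::finite \<times> 'b::finite \<Rightarrow> complex) \<Rightarrow> ('b \<Rightarrow> complex) \<Rightarrow> ('a \<Rightarrow> complex)" where
  "relB Psi chi = normalize_vec (contrB chi Psi)"

definition projA_tensor_id :: "('a::finite \<Rightarrow> complex) \<Rightarrow> ('a \<times> 'b::finite \<Rightarrow> complex) \<Rightarrow> ('a \<times> 'b \<Rightarrow> complex)" where
  "projA_tensor_id phi Psi = (\<lambda>(i, j). phi i * (\<Sum>i'\<in>UNIV. cnj (phi i') * Psi (i', j)))"

text \<open>phi_seq Psi phi1 n is phi^(n+1); chi_seq Psi phi1 n is chi^(n+1).\<close>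
primrec phi_seq :: "('a::finite \<times> 'b::finite \<Rightarrow> complex) \<Rightarrow> ('a \<Rightarrow> complex) \<Rightarrow> nat \<Rightarrow> ('a \<Rightarrow> complex)" where
  "phi_seq Psi phi1 0 = phi1"
| "phi_seq Psi phi1 (Suc n) = relB Psi (relA Psi (phi_seq Psi phi1 n))"

definition chi_seq :: "('a::finite \<times> 'b::finite \<Rightarrow> complex) \<Rightarrow> ('a \<Rightarrow> complex) \<Rightarrow> nat \<Rightarrow> ('b \<Rightarrow> complex)" where
  "chi_seq Psi phi1 n = relA Psi (phi_seq Psi phi1 n)"

end

theory Submission
  imports Defs
begin

definition Lop :: "('a::finite \<times> 'b::finite \<Rightarrow> complex) \<Rightarrow> ('a \<Rightarrow> complex) \<Rightarrow> ('a \<Rightarrow> complex)" where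
  "Lop Psi v = contrB (contrA v Psi) Psi"

lemma cinner_swap: "cinner chi (contrA phi Psi) = cinner phi (contrB chi Psi)"
  unfolding cinner_def contrA_def contrB_def
  apply (simp only: sum_distrib_left)
  apply (subst sum.swap)
  apply (simp add: ac_simps)
  done

lemma cinner_cnj: "cinner u v = cnj (cinner v u)"
  unfolding cinner_def by (simp add: ac_simps)

lemma cnj_mult_self: "cnj z * z = of_real ((cmod z)^2)"
  using complex_norm_square[of z] by (simp add: mult.commute)

lemma cinner_self: "cinner v v = of_real (\<Sum>i\<in>UNIV. (cmod (v i))^2)"
  unfolding cinner_def of_real_sum
  by (rule sum.cong) (auto simp only: cnj_mult_self)

lemma cinner_self_pos:
  assumes "v \<noteq> (\<lambda>_. 0)" shows "cinner v v > 0"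
proof -
  obtain i where i: "v i \<noteq> 0" using assms by auto
  have "(\<Sum>i\<in>UNIV. (cmod (v i))^2) > 0"
    by (rule sum_pos2[of UNIV i]) (use i in auto)
  thus ?thesis by (simp add: cinner_self less_complex_def)
qed

lemma cinner_self_zero: "cinner v v = 0 \<Longrightarrow> v = (\<lambda>_. 0)"
  using cinner_self_pos[of v] by (auto simp: less_complex_def)

lemma contrA_scale: "contrA (\<lambda>i. of_real c * v i) Psi = (\<lambda>j. of_real c * contrA v Psi j)"
  unfolding contrA_def by (simp add: sum_distrib_left ac_simps)

lemma contrB_scale: "contrB (\<lambda>i. of_real c * v i) Psi = (\<lambda>j. of_real c * contrB v Psi j)"
  unfolding contrB_def by (simp add: sum_distrib_left ac_simps)

lemma contrA_zero: "contrA (\<lambda>_. 0) Psi = (\<lambda>_. 0)"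
  unfolding contrA_def by simp

lemma cinner_scale_right: "cinner u (\<lambda>i. c * v i) = c * cinner u v"
  unfolding cinner_def by (simp add: sum_distrib_left ac_simps)

lemma cinner_scale_left: "cinner (\<lambda>i. of_real c * u i) v = of_real c * cinner u v"
  unfolding cinner_def by (simp add: sum_distrib_left ac_simps)

lemma normalize_eq: "normalize_vec v = (\<lambda>i. of_real (1 / vnorm v) * v i)"
  unfolding normalize_vec_def by (simp add: divide_inverse ac_simps)

lemma vnorm_pos: "v \<noteq> (\<lambda>_. 0) \<Longrightarrow> vnorm v > 0"
proof -
  assume a: "v \<noteq> (\<lambda>_. 0)"
  obtain i where i: "v i \<noteq> 0" using a by auto
  have "(\<Sum>i\<in>UNIV. (cmod (v i))^2) > 0"
    by (rule sum_pos2[of UNIV i]) (use i in auto)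
  thus ?thesis unfolding vnorm_def by simp
qed

lemma Lop_selfadj: "cinner (Lop Psi u) w = cinner u (Lop Psi w)"
proof -
  have "cinner (Lop Psi u) w = cnj (cinner w (contrB (contrA u Psi) Psi))"
    unfolding Lop_def by (rule cinner_cnj)
  also have "\<dots> = cnj (cinner (contrA u Psi) (contrA w Psi))"
    by (simp add: cinner_swap)
  also have "\<dots> = cinner (contrA w Psi) (contrA u Psi)"
    by (simp add: cinner_cnj[of "contrA w Psi"])
  also have "\<dots> = cinner u (Lop Psi w)"
    unfolding Lop_def by (rule cinner_swap)
  finally show ?thesis .
qed

lemma Lop_quad: "cinner u (Lop Psi u) = cinner (contrA u Psi) (contrA u Psi)"
  unfolding Lop_def by (simp add: cinner_swap)

lemma hyp_eq: "cinner Psi (projA_tensor_id phi1 Psi) = cinner (contrA phi1 Psi) (contrA phi1 Psi)"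
proof -
  have "cinner Psi (projA_tensor_id phi1 Psi)
      = (\<Sum>i\<in>UNIV. \<Sum>j\<in>UNIV. cnj (Psi (i,j)) * (phi1 i * contrA phi1 Psi j))"
    unfolding cinner_def projA_tensor_id_def contrA_def
    apply (simp add: UNIV_Times_UNIV[symmetric] sum.cartesian_product del: UNIV_Times_UNIV)
    apply (rule sum.cong, simp)
    apply clarsimp
    done
  also have "\<dots> = (\<Sum>j\<in>UNIV. \<Sum>i\<in>UNIV. cnj (Psi (i,j)) * (phi1 i * contrA phi1 Psi j))"
    by (rule sum.swap)
  also have "\<dots> = cinner (contrA phi1 Psi) (contrA phi1 Psi)"
    unfolding cinner_def
    by (rule sum.cong) (auto simp: contrA_def sum_distrib_right ac_simps)
  finally show ?thesis .
qed

theorem mainTheorem9: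
  fixes Psi :: "'a::finite \<times> 'b::finite \<Rightarrow> complex"
    and phi1 :: "'a \<Rightarrow> complex"
  assumes "unit_vec Psi"
    and "unit_vec phi1"
    and "cinner Psi (projA_tensor_id phi1 Psi) > 0"
  shows "(\<forall>n. contrA (phi_seq Psi phi1 n) Psi \<noteq> (\<lambda>_. 0)
            \<and> contrB (chi_seq Psi phi1 n) Psi \<noteq> (\<lambda>_. 0))
       \<and> (\<forall>n. cinner phi1 (phi_seq Psi phi1 n) \<noteq> 0)"
proof -
  define p where "p = phi_seq Psi phi1"
  define u where "u n = contrA (p n) Psi" for n
  define w where "w n = contrB (chi_seq Psi phi1 n) Psi" for n
  have chi_eq: "chi_seq Psi phi1 n = (\<lambda>i. of_real (1 / vnorm (u n)) * u n i)" for n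
    unfolding chi_seq_def relA_def normalize_eq u_def p_def ..
  have w_eq: "w n = (\<lambda>i. of_real (1 / vnorm (u n)) * Lop Psi (p n) i)" for n
    unfolding w_def chi_eq contrB_scale u_def Lop_def ..
  have p_suc: "p (Suc n) = (\<lambda>i. of_real (1 / vnorm (w n)) * w n i)" for n
    unfolding p_def phi_seq.simps relB_def normalize_eq w_def chi_seq_def ..
  have u0: "u 0 \<noteq> (\<lambda>_. 0)"
  proof
    assume "u 0 = (\<lambda>_. 0)"
    hence "cinner Psi (projA_tensor_id phi1 Psi) = 0"
      unfolding hyp_eq by (simp add: u_def p_def cinner_def)
    thus False using assms(3) by simp
  qed
  have uw: "w n \<noteq> (\<lambda>_. 0)" if "u n \<noteq> (\<lambda>_. 0)" for n
  proof
    assume wz: "w n = (\<lambda>_. 0)"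
    have r: "vnorm (u n) > 0" using vnorm_pos that by blast
    have "contrB (u n) Psi = (\<lambda>_. 0)"
    proof
      fix i
      have "of_real (1 / vnorm (u n)) * contrB (u n) Psi i = 0"
        using fun_cong[OF wz, of i] unfolding w_def chi_eq contrB_scale by simp
      thus "contrB (u n) Psi i = 0" using r by simp
    qed
    hence "cinner (u n) (u n) = 0"
      using cinner_swap[of "u n" "p n" Psi] by (simp add: u_def cinner_def)
    thus False using cinner_self_zero that by blast
  qed
  have wu: "u (Suc n) \<noteq> (\<lambda>_. 0)" if "w n \<noteq> (\<lambda>_. 0)" for n
  proof
    assume uz: "u (Suc n) = (\<lambda>_. 0)"
    have r: "vnorm (w n) > 0" using vnorm_pos that by blast
    have "contrA (w n) Psi = (\<lambda>_. 0)"
    proof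
      fix i
      have "of_real (1 / vnorm (w n)) * contrA (w n) Psi i = 0"
        using fun_cong[OF uz, of i] unfolding u_def p_suc contrA_scale by simp
      thus "contrA (w n) Psi i = 0" using r by simp
    qed
    hence "cinner (w n) (w n) = 0"
      using cinner_swap[of "chi_seq Psi phi1 n" "w n" Psi] by (simp add: w_def cinner_def)
    thus False using cinner_self_zero that by blast
  qed
  have unz: "u n \<noteq> (\<lambda>_. 0)" for n
    by (induction n) (use u0 uw wu in auto)
  have wnz: "w n \<noteq> (\<lambda>_. 0)" for n using uw unz by blast
  define k where "k n = 1 / vnorm (w n) * (1 / vnorm (u n))" for n
  have kpos: "k n > 0" for n
    using vnorm_pos[OF unz] vnorm_pos[OF wnz] by (simp add: k_def)
  have p_L: "p (Suc n) = (\<lambda>i. of_real (k n) * Lop Psi (p n) i)" for n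
    unfolding p_suc w_eq k_def by (simp add: ac_simps)
  have L_p: "Lop Psi (p n) = (\<lambda>i. of_real (1 / k n) * p (Suc n) i)" for n
    using kpos[of n] unfolding p_L by (auto simp: field_simps)
  have pnz: "p n \<noteq> (\<lambda>_. 0)" for n
    using unz[of n] unfolding u_def by (auto simp: contrA_zero)
  have pos_mul: "0 < of_real c * z" if "c > 0" "(0::complex) < z" for c z
    using that by (auto simp: less_complex_def)
  have main: "\<forall>a. cinner (p a) (p (a + d)) > 0" for d
  proof (induction d rule: less_induct)
    case (less d)
    show ?case
    proof (cases d)
      case 0 then show ?thesis using cinner_self_pos pnz by auto
    next
      case (Suc d1)
      show ?thesis
      proof (cases d1)
        case 0
        show ?thesis
        proof
          fix a
          have "cinner (p a) (p (a + d)) = of_real (k a) * cinner (u a) (u a)"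
            using Suc 0 by (simp add: p_L cinner_scale_right Lop_quad u_def)
          thus "cinner (p a) (p (a + d)) > 0"
            using pos_mul[OF kpos[of a] cinner_self_pos[OF unz[of a]]] by simp
        qed
      next
        case (Suc d2)
        show ?thesis
        proof
          fix a
          have "cinner (p a) (p (a + d)) = of_real (k (Suc (a + d2))) * cinner (p a) (Lop Psi (p (Suc (a + d2))))"
            using \<open>d = Suc d1\<close> Suc by (simp add: p_L cinner_scale_right)
          also have "\<dots> = of_real (k (Suc (a + d2))) * cinner (Lop Psi (p a)) (p (Suc (a + d2)))"
            by (simp add: Lop_selfadj)
          also have "\<dots> = of_real (k (Suc (a + d2))) * (of_real (1 / k a) * cinner (p (Suc a)) (p (Suc a + d2)))"
            by (simp only: L_p cinner_scale_left) simp
          finally have eq: "cinner (p a) (p (a + d)) = of_real (k (Suc (a + d2))) * (of_real (1 / k a) * cinner (p (Suc a)) (p (Suc a + d2)))" .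
          have "d2 < d" using \<open>d = Suc d1\<close> Suc by simp
          hence "cinner (p (Suc a)) (p (Suc a + d2)) > 0" using less by blast
          thus "cinner (p a) (p (a + d)) > 0"
            unfolding eq using kpos[of a] kpos[of "Suc (a+d2)"] by (intro pos_mul) auto
        qed
      qed
    qed
  qed
  show ?thesis
  proof (intro conjI allI)
    fix n
    show "contrA (phi_seq Psi phi1 n) Psi \<noteq> (\<lambda>_. 0)" using unz[of n] by (simp add: u_def p_def)
    show "contrB (chi_seq Psi phi1 n) Psi \<noteq> (\<lambda>_. 0)" using wnz[of n] by (simp add: w_def)
    have "cinner (p 0) (p (0 + n)) > 0" using main by blast
    thus "cinner phi1 (phi_seq Psi phi1 n) \<noteq> 0" by (simp add: p_def)
  qed
qed

end
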